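(* Let $R$ be a commutative ring with unit and $M$ an $R$-module. Let $a_1,\dots,a_l\in R$, let $b\in M$ be nonzero, and put $a=\sum_{i=1}^l a_i$. The following are equivalent: (1) the equation $\sum_{i=1}^l a_i m_i=b$ is partition regular over $M$; (2) this equation has a constant solution in $M$, i.e. there is $m\in M$ with $\sum_{i=1}^l a_i m=b$; (3) $b\in aM$.
   Context: For a $k\times l$ matrix $\mathbf{A}$ over $R$ and $\mathbf b\in M^k$, the equation $\mathbf{A}\mathbf{m}=\mathbf b$ is partition regular over $M$ if for every $r\ge1$ and every map $\chi\colon M\to\{1,\dots,r\}$ there exists $\mathbf m=(m_1,\dots,m_l)^{\intercal}\in M^l$, not all $m_i$ zero, with $\mathbf{A}\mathbf{m}=\mathbf b$ and $\chi(m_1)=\dots=\chi(m_l)$. Here $k=1$ and $\mathbf A=(a_1,\dots,a_l)$. *)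

theory Defs
  imports "HOL-Analysis.Analysis"
begin

definition partition_regular ::
  "('r::comm_ring_1 \<Rightarrow> 'm::ab_group_add \<Rightarrow> 'm) \<Rightarrow> nat \<Rightarrow> (nat \<Rightarrow> 'r) \<Rightarrow> 'm \<Rightarrow> bool" where
  "partition_regular sc l a b \<longleftrightarrow>
     (\<forall>r::nat. r \<ge> 1 \<longrightarrow> (\<forall>col::'m \<Rightarrow> nat. range col \<subseteq> {1..r} \<longrightarrow>
        (\<exists>m::nat \<Rightarrow> 'm. (\<exists>i\<in>{1..l}. m i \<noteq> 0)
            \<and> (\<Sum>i=1..l. sc (a i) (m i)) = b
            \<and> (\<forall>i\<in>{1..l}. \<forall>j\<in>{1..l}. col (m i) = col (m j)))))"

end

theory Submission
  imports Defs
begin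

definition pc0 :: "('r::comm_ring_1 \<Rightarrow> 'm::ab_group_add \<Rightarrow> 'm) \<Rightarrow> 'r \<Rightarrow> ('m \<times> complex) set \<Rightarrow> bool" where
 "pc0 sc A G \<longleftrightarrow> (\<forall>x z z'. (x,z)\<in>G \<longrightarrow> (x,z')\<in>G \<longrightarrow> z = z')
    \<and> (\<forall>x z y w. (x,z)\<in>G \<longrightarrow> (y,w)\<in>G \<longrightarrow> (x+y, z*w)\<in>G)
    \<and> (\<forall>x z. (x,z)\<in>G \<longrightarrow> (-x, inverse z)\<in>G \<and> norm z = 1)
    \<and> (\<forall>m. (sc A m, 1)\<in>G)"

definition extg :: "('r::comm_ring_1 \<Rightarrow> 'm::ab_group_add \<Rightarrow> 'm) \<Rightarrow> ('m \<times> complex) set \<Rightarrow> 'm \<Rightarrow> complex \<Rightarrow> ('m \<times> complex) set" where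
 "extg sc G x w = {(h + sc (of_int n) x, z * w powi n) | h z n. (h,z)\<in>G}"

lemma pc0_zero:
  assumes "module sc" "pc0 sc A G" shows "(0,1) \<in> G"
proof -
  have "(sc A 0, 1) \<in> G" using assms(2) unfolding pc0_def by blast
  thus ?thesis using module.scale_zero_right[OF assms(1)] by simp
qed

lemma pc0_mult:
  assumes "module sc" "pc0 sc A G" "(y,z) \<in> G"
  shows "(sc (of_int n) y, z powi n) \<in> G"
proof (induction n rule: int_induct[where k=0])
  case base
  then show ?case using pc0_zero[OF assms(1,2)] module.scale_zero_left[OF assms(1)] by simp
next
  case (step1 i)
  have nz: "z \<noteq> 0" using assms(2,3) unfolding pc0_def by force
  have "(sc (of_int i) y + y, z powi i * z) \<in> G" using step1(2) assms(2,3) unfolding pc0_def by blast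
  moreover have "sc (of_int (i+1)) y = sc (of_int i) y + y"
    using module.scale_left_distrib[OF assms(1)] module.scale_one[OF assms(1)] by simp
  moreover have "z powi (i+1) = z powi i * z" using nz by (simp add: power_int_add)
  ultimately show ?case by simp
next
  case (step2 i)
  have nz: "z \<noteq> 0" using assms(2,3) unfolding pc0_def by force
  have "(-y, inverse z) \<in> G" using assms(2,3) unfolding pc0_def by blast
  hence "(sc (of_int i) y + - y, z powi i * inverse z) \<in> G" using step2(2) assms(2,3) unfolding pc0_def by blast
  moreover have "sc (of_int (i-1)) y = sc (of_int i) y + - y"
    using module.scale_left_diff_distrib[OF assms(1)] module.scale_one[OF assms(1)] by simp
  moreover have "z powi (i-1) = z powi i * inverse z" using nz by (simp add: power_int_diff field_simps)
  ultimately show ?case by simp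
qed

lemma ext_pc0:
  assumes md: "module sc" and G: "pc0 sc A G" and w: "norm w = 1"
    and cond: "\<And>j z. (sc (of_int j) x, z) \<in> G \<Longrightarrow> z = w powi j"
  shows "pc0 sc A (extg sc G x w) \<and> G \<subseteq> extg sc G x w \<and> (x, w) \<in> extg sc G x w"
proof -
  interpret module sc by fact
  have wnz: "w \<noteq> 0" using w by auto
  have sub: "G \<subseteq> extg sc G x w"
  proof
    fix p assume "p \<in> G"
    then obtain h z where "p = (h,z)" "(h,z)\<in>G" by (cases p) auto
    moreover have "h = h + sc (of_int 0) x" "z = z * w powi 0" by simp_all
    ultimately show "p \<in> extg sc G x w" unfolding extg_def by blast
  qed
  have xw: "(x, w) \<in> extg sc G x w"
  proof -
    have "x = 0 + sc (of_int 1) x" "w = 1 * w powi 1" by simp_all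
    thus ?thesis using pc0_zero[OF md G] unfolding extg_def by blast
  qed
  have G1: "\<And>x z z'. (x,z)\<in>G \<Longrightarrow> (x,z')\<in>G \<Longrightarrow> z = z'"
   and G2: "\<And>x z y w. (x,z)\<in>G \<Longrightarrow> (y,w)\<in>G \<Longrightarrow> (x+y, z*w)\<in>G"
   and G3: "\<And>x z. (x,z)\<in>G \<Longrightarrow> (-x, inverse z)\<in>G"
   and G4: "\<And>x z. (x,z)\<in>G \<Longrightarrow> norm z = 1"
   and G5: "\<And>m. (sc A m, 1)\<in>G" using G unfolding pc0_def by blast+
  have P1: "z1 = z2" if T1: "(y, z1) \<in> extg sc G x w" and T2: "(y, z2) \<in> extg sc G x w" for y z1 z2
  proof -
    obtain h z n where a: "y = h + sc (of_int n) x" "z1 = z * w powi n" "(h,z)\<in>G"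
      using T1 unfolding extg_def by blast
    obtain h' z' n' where b: "y = h' + sc (of_int n') x" "z2 = z' * w powi n'" "(h',z')\<in>G"
      using T2 unfolding extg_def by blast
    have "(h' + - h, z' * inverse z) \<in> G" using G2 G3 a b by blast
    moreover have "h' + - h = sc (of_int (n - n')) x"
      using a(1) b(1) by (simp add: scale_left_diff_distrib algebra_simps)
    ultimately have e: "z' * inverse z = w powi (n - n')" using cond by metis
    have znz: "z \<noteq> 0" using G4 a(3) by force
    have "z1 = z * w powi n' * w powi (n - n')" using a(2) wnz by (simp add: power_int_diff)
    also have "\<dots> = z2" using e znz b(2) by (simp add: field_simps)
    finally show ?thesis .
  qed
  have P2: "(y1+y2, z1*z2) \<in> extg sc G x w" if T1: "(y1, z1) \<in> extg sc G x w" and T2: "(y2, z2) \<in> extg sc G x w" for y1 y2 z1 z2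
  proof -
    obtain h z n where a: "y1 = h + sc (of_int n) x" "z1 = z * w powi n" "(h,z)\<in>G"
      using T1 unfolding extg_def by blast
    obtain h' z' n' where b: "y2 = h' + sc (of_int n') x" "z2 = z' * w powi n'" "(h',z')\<in>G"
      using T2 unfolding extg_def by blast
    have "(h + h', z * z') \<in> G" using G2 a b by blast
    moreover have "y1 + y2 = (h + h') + sc (of_int (n+n')) x" using a b by (simp add: scale_left_distrib algebra_simps)
    moreover have "z1 * z2 = (z * z') * w powi (n+n')" using a b wnz by (simp add: power_int_add)
    ultimately show ?thesis unfolding extg_def by blast
  qed
  have P3: "(-y, inverse z1) \<in> extg sc G x w \<and> norm z1 = 1" if T1: "(y, z1) \<in> extg sc G x w" for y z1
  proof -
    obtain h z n where a: "y = h + sc (of_int n) x" "z1 = z * w powi n" "(h,z)\<in>G"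
      using T1 unfolding extg_def by blast
    have "(- h, inverse z) \<in> G" using G3 a by blast
    moreover have "-y = (-h) + sc (of_int (-n)) x" using a by (simp add: algebra_simps)
    moreover have "inverse z1 = inverse z * w powi (-n)" using a wnz by (simp add: power_int_minus)
    ultimately have "(-y, inverse z1) \<in> extg sc G x w" unfolding extg_def by blast
    moreover have "norm z1 = 1" using a G4 w by (simp add: norm_mult norm_power_int)
    ultimately show ?thesis by blast
  qed
  have "pc0 sc A (extg sc G x w)" unfolding pc0_def using P1 P2 P3 G5 sub by blast
  thus ?thesis using sub xw by blast
qed

lemma cis_ne1:
  assumes "k \<ge> (2::nat)" shows "exp (complex_of_real (2*pi / real k) * \<i>) \<noteq> 1"
proof
  assume "exp (complex_of_real (2*pi / real k) * \<i>) = 1"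
  then obtain n :: int where n: "2*pi / real k = of_int (2*n) * pi" by (auto simp: exp_eq_1)
  hence "(2*pi) * (1 / real k) = (2*pi) * of_int n" by simp
  hence "1 / real k = of_int n" using pi_gt_zero by (subst (asm) mult_left_cancel) auto
  moreover have "0 < 1 / real k" "1 / real k < 1" using assms by auto
  ultimately have "0 < n" "n < 1" by linarith+
  thus False by simp
qed

lemma cis_pow:
  assumes "k > (0::nat)" shows "exp (complex_of_real (2*pi / real k) * \<i>) ^ k = 1"
proof -
  have "exp (complex_of_real (2*pi / real k) * \<i>) ^ k = exp (of_nat k * (complex_of_real (2*pi / real k) * \<i>))"
    by (rule exp_of_nat_mult[symmetric])
  also have "of_nat k * (complex_of_real (2*pi / real k) * \<i>) = complex_of_real (real k * (2*pi / real k)) * \<i>"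
    by simp
  also have "real k * (2*pi / real k) = 2*pi" using assms by simp
  finally show ?thesis by simp
qed

lemma root_ex:
  assumes md: "module sc" and G: "pc0 sc A G"
  shows "\<exists>w. norm w = 1 \<and> (\<forall>j z. (sc (of_int j) x, z)\<in>G \<longrightarrow> z = w powi j) \<and> ((\<forall>z. (x,z)\<notin>G) \<longrightarrow> w \<noteq> 1)"
proof -
  interpret module sc by fact
  have G1: "\<And>x z z'. (x,z)\<in>G \<Longrightarrow> (x,z')\<in>G \<Longrightarrow> z = z'"
   and G2: "\<And>x z y w. (x,z)\<in>G \<Longrightarrow> (y,w)\<in>G \<Longrightarrow> (x+y, z*w)\<in>G"
   and G3: "\<And>x z. (x,z)\<in>G \<Longrightarrow> (-x, inverse z)\<in>G"
   and G4: "\<And>x z. (x,z)\<in>G \<Longrightarrow> norm z = 1" using G unfolding pc0_def by blast+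
  have G0: "(0,1) \<in> G" by (rule pc0_zero[OF md G])
  show ?thesis
  proof (cases "\<exists>j z. j \<noteq> 0 \<and> (sc (of_int j) x, z) \<in> G")
    case False
    have "norm (-1::complex) = 1" by simp
    moreover have "\<forall>j z. (sc (of_int j) x, z)\<in>G \<longrightarrow> z = (-1) powi j"
    proof (intro allI impI)
      fix j z assume a: "(sc (of_int j) x, z)\<in>G"
      hence "j = 0" using False by blast
      thus "z = (-1) powi j" using a G0 G1 by simp
    qed
    ultimately show ?thesis by (intro exI[of _ "-1"]) auto
  next
    case True
    then obtain j0 z0 where j0: "j0 \<noteq> 0" "(sc (of_int j0) x, z0) \<in> G" by blast
    have "\<exists>k::nat. k > 0 \<and> (\<exists>z. (sc (of_int (int k)) x, z) \<in> G)"
    proof (cases "j0 > 0")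
      case True thus ?thesis using j0 by (intro exI[of _ "nat j0"]) auto
    next
      case False
      have "(- sc (of_int j0) x, inverse z0) \<in> G" using G3 j0 by blast
      moreover have e: "- sc (of_int j0) x = sc (of_int (int (nat (-j0)))) x" using False j0 by simp
      ultimately have "(sc (of_int (int (nat (-j0)))) x, inverse z0) \<in> G" by metis
      moreover have "nat (-j0) > 0" using False j0 by simp
      ultimately show ?thesis by blast
    qed
    define k where "k = (LEAST k::nat. k > 0 \<and> (\<exists>z. (sc (of_int (int k)) x, z) \<in> G))"
    have kP: "k > 0 \<and> (\<exists>z. (sc (of_int (int k)) x, z) \<in> G)"
      unfolding k_def by (rule LeastI_ex) fact
    have kmin: "\<And>r::nat. r > 0 \<Longrightarrow> (\<exists>z. (sc (of_int (int r)) x, z) \<in> G) \<Longrightarrow> k \<le> r"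
      unfolding k_def by (rule Least_le) blast
    obtain c where c: "(sc (of_int (int k)) x, c) \<in> G" using kP by blast
    have cn: "norm c = 1" using G4 c by blast
    hence cnz: "c \<noteq> 0" by auto
    define w0 where "w0 = exp (Ln c / of_nat k)"
    have w0k: "w0 ^ k = c"
    proof -
      have "w0 ^ k = exp (of_nat k * (Ln c / of_nat k))" unfolding w0_def by (rule exp_of_nat_mult[symmetric])
      also have "of_nat k * (Ln c / of_nat k) = Ln c" using kP by simp
      also have "exp (Ln c) = c" using cnz by simp
      finally show ?thesis .
    qed
    define \<zeta> where "\<zeta> = exp (complex_of_real (2*pi / real k) * \<i>)"
    have zk: "\<zeta> ^ k = 1" unfolding \<zeta>_def using kP by (rule cis_pow[OF conjunct1])
    define w where "w = (if w0 = 1 then w0 * \<zeta> else w0)"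
    have wk: "w ^ k = c" unfolding w_def using w0k zk by (cases "w0 = 1") (auto simp: power_mult_distrib)
    have wn: "norm w = 1"
    proof -
      have "norm w ^ k = 1" using wk cn by (metis norm_power)
      thus ?thesis using kP power_eq_iff_eq_base[of k "cmod w" 1] by simp
    qed
    have wnz: "w \<noteq> 0" using wn by auto
    have cond: "\<forall>j z. (sc (of_int j) x, z)\<in>G \<longrightarrow> z = w powi j"
    proof (intro allI impI)
      fix j z assume a: "(sc (of_int j) x, z)\<in>G"
      define q where "q = j div int k"
      define r where "r = j mod int k"
      have jqr: "j = q * int k + r" unfolding q_def r_def by simp
      have r0: "0 \<le> r" "r < int k" unfolding r_def using kP by auto
      have "(sc (of_int q) (sc (of_int (int k)) x), c powi q) \<in> G" by (rule pc0_mult[OF md G c])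
      hence m: "(sc (of_int (q * int k)) x, c powi q) \<in> G" by simp
      have "(sc (of_int j) x + - sc (of_int (q * int k)) x, z * inverse (c powi q)) \<in> G"
        using G2 G3 a m by blast
      moreover have "sc (of_int j) x + - sc (of_int (q * int k)) x = sc (of_int (int (nat r))) x"
        using jqr r0 by (simp add: scale_left_diff_distrib[symmetric])
      ultimately have "\<exists>z. (sc (of_int (int (nat r))) x, z) \<in> G" by auto
      hence "r = 0" using kmin[of "nat r"] r0 by (cases "nat r > 0") auto
      hence jq: "j = q * int k" using jqr by simp
      hence "z = c powi q" using a m G1 by blast
      also have "\<dots> = (w ^ k) powi q" using wk by simp
      also have "\<dots> = w powi j" using jq by (simp add: power_int_mult mult.commute[of q] power_int_of_nat[symmetric] del: power_int_of_nat)
      finally show "z = w powi j" .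
    qed
    have ne: "w \<noteq> 1" if nx: "\<forall>z. (x,z)\<notin>G"
    proof -
      have "k \<noteq> 1" using kP nx by auto
      hence "k \<ge> 2" using kP by auto
      hence "\<zeta> \<noteq> 1" unfolding \<zeta>_def by (rule cis_ne1)
      thus ?thesis unfolding w_def by auto
    qed
    show ?thesis using wn cond ne by blast
  qed
qed


lemma pc0_union:
  assumes C: "C \<noteq> {}" "\<And>X. X \<in> C \<Longrightarrow> pc0 sc A X" and ch: "\<And>X Y. X \<in> C \<Longrightarrow> Y \<in> C \<Longrightarrow> X \<subseteq> Y \<or> Y \<subseteq> X"
  shows "pc0 sc A (\<Union>C)"
proof -
  have two: "\<exists>Z\<in>C. p \<in> Z \<and> q \<in> Z" if pq: "p \<in> \<Union>C" "q \<in> \<Union>C" for p q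
  proof -
    obtain X Y where "X\<in>C" "Y\<in>C" "p\<in>X" "q\<in>Y" using pq by blast
    thus ?thesis using ch[of X Y] by blast
  qed
  obtain X0 where X0: "X0 \<in> C" using C by blast
  show ?thesis unfolding pc0_def
  proof (intro conjI allI impI)
    fix x z z' assume "(x,z) \<in> \<Union>C" "(x,z') \<in> \<Union>C"
    then obtain Z where "Z\<in>C" "(x,z)\<in>Z" "(x,z')\<in>Z" using two by blast
    thus "z = z'" using C(2) unfolding pc0_def by blast
  next
    fix x z y w assume "(x,z) \<in> \<Union>C" "(y,w) \<in> \<Union>C"
    then obtain Z where "Z\<in>C" "(x,z)\<in>Z" "(y,w)\<in>Z" using two by blast
    thus "(x+y, z*w) \<in> \<Union>C" using C(2) unfolding pc0_def by blast
  next
    fix x z assume "(x,z) \<in> \<Union>C"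
    then obtain Z where "Z\<in>C" "(x,z)\<in>Z" by blast
    thus "(-x, inverse z) \<in> \<Union>C" using C(2) unfolding pc0_def by blast
  next
    fix x z assume "(x,z) \<in> \<Union>C"
    then obtain Z where "Z\<in>C" "(x,z)\<in>Z" by blast
    thus "norm z = 1" using C(2) unfolding pc0_def by blast
  next
    fix m show "(sc A m, 1) \<in> \<Union>C" using C(2)[OF X0] X0 unfolding pc0_def by blast
  qed
qed

lemma char_ex:
  assumes md: "module sc" and nb: "b \<notin> range (sc A)"
  shows "\<exists>chr::_\<Rightarrow>complex. (\<forall>x y. chr (x+y) = chr x * chr y) \<and> (\<forall>x. norm (chr x) = 1) \<and> (\<forall>m. chr (sc A m) = 1) \<and> chr b \<noteq> 1"
proof -
  interpret module sc by fact
  define Ga where "Ga = {(sc A m, 1::complex) | m. True}"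
  have pa: "pc0 sc A Ga" unfolding pc0_def Ga_def
  proof (intro conjI allI impI)
    fix x z y w assume "(x, z) \<in> {(sc A m, 1::complex) |m. True}" "(y, w) \<in> {(sc A m, 1::complex) |m. True}"
    then obtain m m' where "x = sc A m" "y = sc A m'" "z = 1" "w = 1" by blast
    hence "x + y = sc A (m+m')" "z * w = 1" by (simp_all add: scale_right_distrib)
    thus "(x + y, z * w) \<in> {(sc A m, 1::complex) |m. True}" by blast
  next
    fix x z assume "(x, z) \<in> {(sc A m, 1::complex) |m. True}"
    then obtain m where "x = sc A m" "z = 1" by blast
    hence "-x = sc A (-m)" "inverse z = 1" by simp_all
    thus "(-x, inverse z) \<in> {(sc A m, 1::complex) |m. True}" by blast
  qed auto
  obtain w0 where w0: "norm w0 = 1" "\<forall>j z. (sc (of_int j) b, z)\<in>Ga \<longrightarrow> z = w0 powi j"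
     "(\<forall>z. (b,z)\<notin>Ga) \<longrightarrow> w0 \<noteq> 1" using root_ex[OF md pa] by blast
  have "\<forall>z. (b,z)\<notin>Ga" using nb unfolding Ga_def by blast
  hence w01: "w0 \<noteq> 1" using w0(3) by blast
  define G1 where "G1 = extg sc Ga b w0"
  have g1: "pc0 sc A G1" "(b, w0) \<in> G1" using ext_pc0[OF md pa w0(1)] w0(2) unfolding G1_def by blast+
  define S where "S = {G. pc0 sc A G \<and> (b,w0) \<in> G}"
  have "\<forall>C\<in>chains S. \<exists>U\<in>S. \<forall>X\<in>C. X \<subseteq> U"
  proof
    fix C assume C: "C \<in> chains S"
    show "\<exists>U\<in>S. \<forall>X\<in>C. X \<subseteq> U"
    proof (cases "C = {}")
      case True thus ?thesis using g1 unfolding S_def by blast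
    next
      case False
      have CS: "C \<subseteq> S" and ch: "\<And>X Y. X \<in> C \<Longrightarrow> Y \<in> C \<Longrightarrow> X \<subseteq> Y \<or> Y \<subseteq> X"
        using C unfolding chains_def chain_subset_def by blast+
      have "pc0 sc A (\<Union>C)" by (rule pc0_union[OF False _ ch]) (use CS S_def in blast)
      moreover have "(b,w0) \<in> \<Union>C" using False CS unfolding S_def by blast
      ultimately show ?thesis unfolding S_def by blast
    qed
  qed
  from Zorn_Lemma2[OF this] obtain Gm where Gm: "Gm \<in> S" and mx: "\<And>X. X \<in> S \<Longrightarrow> Gm \<subseteq> X \<Longrightarrow> X = Gm" by blast
  have pm: "pc0 sc A Gm" "(b,w0) \<in> Gm" using Gm unfolding S_def by blast+
  have tot: "\<exists>z. (x,z) \<in> Gm" for x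
  proof (rule ccontr)
    assume nx: "\<not> (\<exists>z. (x,z) \<in> Gm)"
    obtain w where w: "norm w = 1" "\<forall>j z. (sc (of_int j) x, z)\<in>Gm \<longrightarrow> z = w powi j"
      using root_ex[OF md pm(1)] by blast
    have e: "pc0 sc A (extg sc Gm x w) \<and> Gm \<subseteq> extg sc Gm x w \<and> (x, w) \<in> extg sc Gm x w"
      using ext_pc0[OF md pm(1) w(1)] w(2) by blast
    hence "extg sc Gm x w \<in> S" using pm(2) unfolding S_def by blast
    hence "extg sc Gm x w = Gm" using mx e by blast
    thus False using e nx by auto
  qed
  have sv: "\<And>x z z'. (x,z)\<in>Gm \<Longrightarrow> (x,z')\<in>Gm \<Longrightarrow> z = z'"
   and G2: "\<And>x z y w. (x,z)\<in>Gm \<Longrightarrow> (y,w)\<in>Gm \<Longrightarrow> (x+y, z*w)\<in>Gm"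
   and G4: "\<And>x z. (x,z)\<in>Gm \<Longrightarrow> norm z = 1"
   and G5: "\<And>m. (sc A m, 1)\<in>Gm" using pm(1) unfolding pc0_def by blast+
  define chr where "chr x = (THE z. (x,z) \<in> Gm)" for x
  have chi: "(x, chr x) \<in> Gm" for x
    unfolding chr_def using tot[of x] sv by (metis theI)
  have "chr (x+y) = chr x * chr y" for x y using G2[OF chi chi] chi sv by blast
  moreover have "norm (chr x) = 1" for x using G4 chi by blast
  moreover have "chr (sc A m) = 1" for m using G5 chi sv by blast
  moreover have "chr b = w0" using pm(2) chi sv by blast
  ultimately show ?thesis using w01 by (intro exI[of _ chr]) auto
qed


lemma chr_sum:
  fixes chr :: "'m::ab_group_add \<Rightarrow> complex"
  assumes h: "\<And>x y. chr (x+y) = chr x * chr y" and n: "\<And>x. norm (chr x) = 1"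
  shows "chr (sum f S) = (\<Prod>i\<in>S. chr (f i))"
proof -
  have "chr 0 = chr 0 * chr 0" using h[of 0 0] by simp
  moreover have "chr 0 \<noteq> 0" using n[of 0] by auto
  ultimately have z: "chr 0 = 1" by (metis mult_cancel_left2)
  show ?thesis by (induction S rule: infinite_finite_induct) (simp_all add: z h)
qed

lemma finite_coloring:
  assumes "finite (range F)"
  shows "\<exists>r::nat. r \<ge> 1 \<and> (\<exists>col::'a \<Rightarrow> nat. range col \<subseteq> {1..r} \<and> (\<forall>x y. col x = col y \<longrightarrow> F x = F y))"
proof -
  obtain h where h: "bij_betw h (range F) {0..<card (range F)}" using ex_bij_betw_finite_nat[OF assms] by blast
  define col where "col x = h (F x) + 1" for x
  have "card (range F) \<ge> 1" using assms by (simp add: Suc_le_eq card_gt_0_iff)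
  moreover have "range col \<subseteq> {1..card (range F)}"
  proof
    fix c assume "c \<in> range col"
    then obtain x where "c = h (F x) + 1" unfolding col_def by blast
    moreover have "h (F x) \<in> {0..<card (range F)}" using h unfolding bij_betw_def by blast
    ultimately show "c \<in> {1..card (range F)}" by auto
  qed
  moreover have "\<forall>x y. col x = col y \<longrightarrow> F x = F y"
    using h unfolding col_def bij_betw_def inj_on_def by auto
  ultimately show ?thesis by blast
qed

lemma floor_close:
  assumes "\<lfloor>K * u\<rfloor> = \<lfloor>K * v\<rfloor>" "K > (0::real)"
  shows "\<bar>u - v\<bar> \<le> 1 / K"
proof -
  have a1: "of_int \<lfloor>K * u\<rfloor> \<le> K * u" "K * u < of_int \<lfloor>K * u\<rfloor> + 1" by linarith+
  have a2: "of_int \<lfloor>K * v\<rfloor> \<le> K * v" "K * v < of_int \<lfloor>K * v\<rfloor> + 1" by linarith+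
  have "\<bar>K * u - K * v\<bar> < 1" using a1 a2 assms(1) by linarith
  moreover have "\<bar>K * u - K * v\<bar> = K * \<bar>u - v\<bar>" using assms(2) by (simp add: abs_mult right_diff_distrib[symmetric])
  ultimately have "K * \<bar>u - v\<bar> \<le> 1" by simp
  thus ?thesis using assms(2) by (simp add: field_simps)
qed

lemma floor_bound:
  assumes "\<bar>u\<bar> \<le> 1"
  shows "\<lfloor>real K * u\<rfloor> \<in> {- int K..int K}"
proof -
  have "\<bar>real K * u\<bar> \<le> real K" using assms by (simp add: abs_mult mult_left_le)
  hence "real K * u \<le> real K" "- real K \<le> real K * u" by linarith+
  thus ?thesis by (simp add: floor_le_iff le_floor_iff)
qed


lemma not_pr:
  fixes sc :: "'r::comm_ring_1 \<Rightarrow> 'm::ab_group_add \<Rightarrow> 'm"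
  assumes md: "module sc" and nb: "b \<notin> range (sc (\<Sum>i=1..l. a i))"
  shows "\<not> partition_regular sc l a b"
proof
  assume pr: "partition_regular sc l a b"
  interpret module sc by fact
  define A where "A = (\<Sum>i=1..l. a i)"
  obtain chr :: "'m \<Rightarrow> complex" where h: "\<And>x y. chr (x+y) = chr x * chr y" and n: "\<And>x. norm (chr x) = 1"
    and ca: "\<And>m. chr (sc A m) = 1" and cb: "chr b \<noteq> 1"
    using char_ex[OF md nb] unfolding A_def by blast
  define \<delta> where "\<delta> = cmod (chr b - 1)"
  have dpos: "\<delta> > 0" using cb unfolding \<delta>_def by simp
  obtain K :: nat where K: "2 * real l / \<delta> < real K" using reals_Archimedean2 by blast
  have Kpos: "real K > 0" using K dpos by (smt (verit) divide_nonneg_pos of_nat_0_le_iff)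
  have Kd: "2 * real l / real K < \<delta>" using K dpos Kpos by (simp add: field_simps)
  define \<psi> where "\<psi> i m = chr (sc (a i) m)" for i m
  define F where "F m = map (\<lambda>i. (\<lfloor>real K * Re (\<psi> i m)\<rfloor>, \<lfloor>real K * Im (\<psi> i m)\<rfloor>)) [1..<l+1]" for m
  have "range F \<subseteq> {xs. set xs \<subseteq> {- int K..int K} \<times> {- int K..int K} \<and> length xs = l}"
  proof
    fix xs assume "xs \<in> range F"
    then obtain m where xs: "xs = F m" by blast
    have "\<bar>Re (\<psi> i m)\<bar> \<le> 1" "\<bar>Im (\<psi> i m)\<bar> \<le> 1" for i
      using abs_Re_le_cmod[of "\<psi> i m"] abs_Im_le_cmod[of "\<psi> i m"] n unfolding \<psi>_def by auto
    thus "xs \<in> {xs. set xs \<subseteq> {- int K..int K} \<times> {- int K..int K} \<and> length xs = l}"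
      unfolding xs F_def using floor_bound by auto
  qed
  moreover have "finite {xs. set xs \<subseteq> {- int K..int K} \<times> {- int K..int K} \<and> length xs = l}"
    by (rule finite_lists_length_eq) simp
  ultimately have "finite (range F)" by (rule finite_subset)
  from finite_coloring[OF this] obtain r :: nat and col :: "'m \<Rightarrow> nat" where r: "r \<ge> 1"
     and col: "range col \<subseteq> {1..r}" and colF': "\<forall>x y. col x = col y \<longrightarrow> F x = F y"
    by blast
  have colF: "\<And>x y. col x = col y \<Longrightarrow> F x = F y" using colF' by blast
  obtain m where m0: "\<exists>i\<in>{1..l}. m i \<noteq> 0" and ms: "(\<Sum>i=1..l. sc (a i) (m i)) = b"
    and mc: "\<forall>i\<in>{1..l}. \<forall>j\<in>{1..l}. col (m i) = col (m j)"
    using pr[unfolded partition_regular_def, rule_format, OF r col] by blast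
  have l1: "1 \<in> {1..l}" using m0 by auto
  have close: "cmod (\<psi> i (m i) - \<psi> i (m 1)) \<le> 2 / real K" if i: "i \<in> {1..l}" for i
  proof -
    have "F (m i) = F (m 1)" using colF mc i l1 by blast
    moreover have "i \<in> set [1..<l+1]" using i by auto
    ultimately have e: "\<lfloor>real K * Re (\<psi> i (m i))\<rfloor> = \<lfloor>real K * Re (\<psi> i (m 1))\<rfloor>"
        "\<lfloor>real K * Im (\<psi> i (m i))\<rfloor> = \<lfloor>real K * Im (\<psi> i (m 1))\<rfloor>"
      unfolding F_def by (auto simp: map_eq_conv)
    have "cmod (\<psi> i (m i) - \<psi> i (m 1)) \<le> \<bar>Re (\<psi> i (m i) - \<psi> i (m 1))\<bar> + \<bar>Im (\<psi> i (m i) - \<psi> i (m 1))\<bar>"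
      by (rule cmod_le)
    also have "\<dots> \<le> 1 / real K + 1 / real K"
      using floor_close[OF e(1) Kpos] floor_close[OF e(2) Kpos] by simp
    finally show ?thesis by simp
  qed
  have "chr b = (\<Prod>i=1..l. \<psi> i (m i))" unfolding ms[symmetric] \<psi>_def by (rule chr_sum[OF h n])
  moreover have "(\<Prod>i=1..l. \<psi> i (m 1)) = 1"
  proof -
    have "(\<Prod>i=1..l. \<psi> i (m 1)) = chr (\<Sum>i=1..l. sc (a i) (m 1))" unfolding \<psi>_def by (rule chr_sum[OF h n, symmetric])
    also have "(\<Sum>i=1..l. sc (a i) (m 1)) = sc A (m 1)" unfolding A_def by (rule scale_sum_left[symmetric])
    finally show ?thesis using ca by simp
  qed
  ultimately have "\<delta> = cmod ((\<Prod>i=1..l. \<psi> i (m i)) - (\<Prod>i=1..l. \<psi> i (m 1)))" unfolding \<delta>_def by simp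
  also have "\<dots> \<le> (\<Sum>i=1..l. cmod (\<psi> i (m i) - \<psi> i (m 1)))"
    by (rule norm_prod_diff) (simp_all add: \<psi>_def n)
  also have "\<dots> \<le> (\<Sum>i=1..l. 2 / real K)" by (rule sum_mono) (rule close)
  also have "\<dots> = 2 * real l / real K" by simp
  finally show False using Kd by simp
qed

theorem theorem5p2:
  fixes sc :: "'r::comm_ring_1 \<Rightarrow> 'm::ab_group_add \<Rightarrow> 'm"
    and l :: nat and a :: "nat \<Rightarrow> 'r" and b :: 'm
  assumes "module sc"
    and "b \<noteq> 0"
  shows "(partition_regular sc l a b \<longleftrightarrow> (\<exists>m. (\<Sum>i=1..l. sc (a i) m) = b))
       \<and> ((\<exists>m. (\<Sum>i=1..l. sc (a i) m) = b) \<longleftrightarrow> b \<in> range (sc (\<Sum>i=1..l. a i)))"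
proof -
  interpret module sc by fact
  have eq: "(\<Sum>i=1..l. sc (a i) m) = sc (\<Sum>i=1..l. a i) m" for m by (rule scale_sum_left[symmetric])
  have p2: "(\<exists>m. (\<Sum>i=1..l. sc (a i) m) = b) \<longleftrightarrow> b \<in> range (sc (\<Sum>i=1..l. a i))"
    unfolding eq by auto
  have p1: "partition_regular sc l a b" if c: "\<exists>m. (\<Sum>i=1..l. sc (a i) m) = b"
  proof -
    obtain m0 where m0: "(\<Sum>i=1..l. sc (a i) m0) = b" using c by blast
    have "l \<noteq> 0"
    proof
      assume "l = 0" thus False using m0 assms(2) by simp
    qed
    hence l1: "1 \<in> {1..l}" by auto
    have "m0 \<noteq> 0" using m0 assms(2) by auto
    show ?thesis unfolding partition_regular_def
      using l1 \<open>m0 \<noteq> 0\<close> m0 by (intro allI impI exI[of _ "\<lambda>_. m0"]) auto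
  qed
  have "partition_regular sc l a b \<Longrightarrow> (\<exists>m. (\<Sum>i=1..l. sc (a i) m) = b)"
    using not_pr[OF assms(1)] p2 by blast
  thus ?thesis using p1 p2 by blast
qed

end
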